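(* Let $p\ge1$, $m=2p$, $j=\mathrm{diag}(I_p,-I_p)$, $n>0$. Let $A$ be an $n\times n$ matrix with $\det A\neq0$, $S_0=S_0^*$ an $n\times n$ matrix and $\Pi_0$ an $n\times m$ matrix with $AS_0-S_0A^*=i\Pi_0j\Pi_0^*$. Define for $k\ge0$ $$\Pi_{k+1}=\Pi_k+iA^{-1}\Pi_kj,\qquad S_{k+1}=S_k+A^{-1}S_k(A^* )^{-1}+A^{-1}\Pi_k\Pi_k^*(A^* )^{-1}.$$ Suppose $\det S_r\neq0$ for $0\le r\le N$. Put $C_k=I_m+\Pi_k^*S_k^{-1}\Pi_k-\Pi_{k+1}^*S_{k+1}^{-1}\Pi_{k+1}$ for $0\le k<N$, and let $W_k(\lambda)$ be the solution of $W_{k+1}(\lambda)-W_k(\lambda)=-\frac{i}{\lambda}jC_kW_k(\lambda)$ with $W_0(\lambda)=I_m$. Then for $0\le k<N$ $$W_{k+1}(\lambda)=w_A(k+1,\lambda)\Big(I_m-\frac{i}{\lambda}j\Big)^{k+1}w_A(0,\lambda)^{-1},$$ where $w_A(k,\lambda)=I_m-ij\Pi_k^*S_k^{-1}(A-\lambda I_n)^{-1}\Pi_k$.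
   Context: $I_r$ denotes the $r\times r$ identity matrix; $\lambda$ is a complex parameter (the identity holds as meromorphic matrix functions of $\lambda$). *)

theory Defs
  imports "Jordan_Normal_Form.Schur_Decomposition" "Jordan_Normal_Form.Determinant"
begin

definition minv :: "complex mat \<Rightarrow> complex mat" where
  "minv M = (1 / det M) \<cdot>\<^sub>m adj_mat M"

definition jmat :: "nat \<Rightarrow> complex mat" where
  "jmat p = mat (2*p) (2*p) (\<lambda>(a,b). if a = b then (if a < p then 1 else -1) else 0)"

primrec Pi_seq :: "nat \<Rightarrow> complex mat \<Rightarrow> complex mat \<Rightarrow> nat \<Rightarrow> complex mat" where
  "Pi_seq p A Pi0 0 = Pi0"
| "Pi_seq p A Pi0 (Suc k) =
     Pi_seq p A Pi0 k + \<i> \<cdot>\<^sub>m (minv A * Pi_seq p A Pi0 k * jmat p)"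

primrec S_seq :: "nat \<Rightarrow> complex mat \<Rightarrow> complex mat \<Rightarrow> complex mat \<Rightarrow> nat \<Rightarrow> complex mat" where
  "S_seq p A S0 Pi0 0 = S0"
| "S_seq p A S0 Pi0 (Suc k) =
     S_seq p A S0 Pi0 k
     + minv A * S_seq p A S0 Pi0 k * minv (mat_adjoint A)
     + minv A * Pi_seq p A Pi0 k * mat_adjoint (Pi_seq p A Pi0 k) * minv (mat_adjoint A)"

definition C_mat :: "nat \<Rightarrow> complex mat \<Rightarrow> complex mat \<Rightarrow> complex mat \<Rightarrow> nat \<Rightarrow> complex mat" where
  "C_mat p A S0 Pi0 k =
     1\<^sub>m (2*p)
     + mat_adjoint (Pi_seq p A Pi0 k) * minv (S_seq p A S0 Pi0 k) * Pi_seq p A Pi0 k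
     - mat_adjoint (Pi_seq p A Pi0 (Suc k)) * minv (S_seq p A S0 Pi0 (Suc k)) * Pi_seq p A Pi0 (Suc k)"

primrec W_seq :: "nat \<Rightarrow> complex mat \<Rightarrow> complex mat \<Rightarrow> complex mat \<Rightarrow> nat \<Rightarrow> complex \<Rightarrow> complex mat" where
  "W_seq p A S0 Pi0 0 z = 1\<^sub>m (2*p)"
| "W_seq p A S0 Pi0 (Suc k) z =
     W_seq p A S0 Pi0 k z - (\<i> / z) \<cdot>\<^sub>m (jmat p * C_mat p A S0 Pi0 k * W_seq p A S0 Pi0 k z)"

definition wA :: "nat \<Rightarrow> complex mat \<Rightarrow> complex mat \<Rightarrow> complex mat \<Rightarrow> nat \<Rightarrow> complex \<Rightarrow> complex mat" where
  "wA p A S0 Pi0 k z =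
     1\<^sub>m (2*p) - \<i> \<cdot>\<^sub>m (jmat p * mat_adjoint (Pi_seq p A Pi0 k) * minv (S_seq p A S0 Pi0 k)
        * minv (A - z \<cdot>\<^sub>m 1\<^sub>m (dim_row A)) * Pi_seq p A Pi0 k)"

end

theory Submission
  imports Defs
begin

definition linop :: "((nat \<Rightarrow> complex) \<Rightarrow> (nat \<Rightarrow> complex)) \<Rightarrow> bool" where
  "linop f \<longleftrightarrow> (\<forall>x y. f (\<lambda>i. x i + y i) = (\<lambda>i. f x i + f y i)) \<and> (\<forall>c x. f (\<lambda>i. c * x i) = (\<lambda>i. c * f x i))"

typedef lin = "{f. linop f}"
  by (rule exI[of _ "\<lambda>x i. 0"]) (simp add: linop_def)

setup_lifting type_definition_lin

lemma linop_add: "linop f \<Longrightarrow> f (\<lambda>i. x i + y i) = (\<lambda>i. f x i + f y i)"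
  by (simp add: linop_def)
lemma linop_scale: "linop f \<Longrightarrow> f (\<lambda>i. c * x i) = (\<lambda>i. c * f x i)"
  by (simp add: linop_def)
lemma linop_minus: "linop f \<Longrightarrow> f (\<lambda>i. - x i) = (\<lambda>i. - f x i)"
  using linop_scale[of f "-1" x] by simp
lemma linop_diff: "linop f \<Longrightarrow> f (\<lambda>i. x i - y i) = (\<lambda>i. f x i - f y i)"
  using linop_add[of f x "\<lambda>i. - y i"] linop_minus[of f y] by simp

instantiation lin :: ring_1
begin
lift_definition zero_lin :: lin is "\<lambda>x i. 0" by (simp add: linop_def)
lift_definition one_lin :: lin is "\<lambda>x. x" by (simp add: linop_def)
lift_definition plus_lin :: "lin \<Rightarrow> lin \<Rightarrow> lin" is "\<lambda>f g x i. f x i + g x i"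
  unfolding linop_def by (simp add: algebra_simps)
lift_definition uminus_lin :: "lin \<Rightarrow> lin" is "\<lambda>f x i. - f x i"
  unfolding linop_def by (simp add: algebra_simps)
lift_definition minus_lin :: "lin \<Rightarrow> lin \<Rightarrow> lin" is "\<lambda>f g x i. f x i - g x i"
  unfolding linop_def by (simp add: algebra_simps)
lift_definition times_lin :: "lin \<Rightarrow> lin \<Rightarrow> lin" is "\<lambda>f g x. f (g x)"
  unfolding linop_def by simp
instance
proof
  fix a b c :: lin
  show "a * b * c = a * (b * c)" by transfer simp
  show "a + b + c = a + (b + c)" by transfer (simp add: add.assoc)
  show "a + b = b + a" by transfer (simp add: add.commute)
  show "0 + a = a" by transfer simp
  show "- a + a = 0" by transfer simp
  show "a - b = a + - b" by transfer simp
  show "1 * a = a" by transfer simp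
  show "a * 1 = a" by transfer simp
  show "(a + b) * c = a * c + b * c" by transfer simp
  show "a * (b + c) = a * b + a * c"
    apply transfer
    apply (rule ext)
    subgoal for a b c x using linop_add[of a "b x" "c x"] by simp
    done
  show "(0::lin) \<noteq> 1"
    apply transfer
    apply (rule notI)
    apply (drule fun_cong[where x="\<lambda>i. 1"])
    apply (drule fun_cong[where x=0])
    apply simp
    done
qed
end

lift_definition sc :: "complex \<Rightarrow> lin" is "\<lambda>c x i. c * x i"
  unfolding linop_def by (simp add: algebra_simps)

lemma sc_comm: "f * sc c = sc c * f"
  by transfer (simp add: linop_scale)
lemma sc_comm2: "f * (sc c * g) = sc c * (f * g)"
  by (metis mult.assoc sc_comm)
lemma sc_mult: "sc c * sc d = sc (c * d)" by transfer (simp add: mult.assoc)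
lemma sc_mult2: "sc c * (sc d * f) = sc (c * d) * f" by (metis mult.assoc sc_mult)
lemma sc_one: "sc 1 = 1" by transfer simp
lemma sc_zero: "sc 0 = 0" by transfer simp
lemma sc_add: "sc (c + d) = sc c + sc d" by transfer (simp add: distrib_right)
lemma sc_uminus: "sc (- c) = - sc c" by transfer simp
lemma sc_minus_one_mult: "sc (-1) * f = - f" by (simp add: sc_uminus sc_one)

lift_definition phi :: "complex mat \<Rightarrow> lin" is
  "\<lambda>M x i. if i < dim_row M then (\<Sum>k<dim_col M. M $$ (i,k) * x k) else 0"
  unfolding linop_def by (simp add: fun_eq_iff distrib_left sum.distrib sum_distrib_left mult.left_commute)

lemma phi_mult: "dim_col A = dim_row B \<Longrightarrow> phi (A * B) = phi A * phi B"
proof (transfer, rule ext, rule ext)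
  fix A B :: "complex mat" and x :: "nat \<Rightarrow> complex" and i :: nat
  assume d: "dim_col A = dim_row B"
  show "(if i < dim_row (A * B) then \<Sum>k<dim_col (A * B). (A * B) $$ (i, k) * x k else 0) =
        (if i < dim_row A then \<Sum>k<dim_col A. A $$ (i, k) *
          (if k < dim_row B then \<Sum>l<dim_col B. B $$ (k, l) * x l else 0) else 0)"
  proof (cases "i < dim_row A")
    case True
    have "(\<Sum>k<dim_col (A * B). (A * B) $$ (i, k) * x k)
        = (\<Sum>l<dim_col B. (\<Sum>k<dim_col A. A $$ (i,k) * B $$ (k,l)) * x l)"
      using True d by (simp add: scalar_prod_def lessThan_atLeast0)
    also have "\<dots> = (\<Sum>k<dim_col A. A $$ (i, k) * (\<Sum>l<dim_col B. B $$ (k, l) * x l))"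
      by (simp add: sum_distrib_left sum_distrib_right mult.assoc sum.swap[of _ "{..<dim_col B}"])
    finally show ?thesis using True d by simp
  qed simp
qed

lemma phi_add: "dim_row A = dim_row B \<Longrightarrow> dim_col A = dim_col B \<Longrightarrow> phi (A + B) = phi A + phi B"
  by transfer (auto simp: fun_eq_iff distrib_right sum.distrib)

lemma phi_minus: "dim_row A = dim_row B \<Longrightarrow> dim_col A = dim_col B \<Longrightarrow> phi (A - B) = phi A - phi B"
  by transfer (auto simp: fun_eq_iff left_diff_distrib sum_subtractf)

lemma phi_smult: "phi (c \<cdot>\<^sub>m A) = sc c * phi A"
  by transfer (auto simp: fun_eq_iff sum_distrib_left mult.assoc)

lemma phi_inj: assumes "phi A = phi B" "dim_row A = dim_row B" "dim_col A = dim_col B"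
  shows "A = B"
proof (rule eq_matI)
  fix i j assume ij: "i < dim_row B" "j < dim_col B"
  have "Rep_lin (phi A) (\<lambda>k. if k = j then 1 else 0) i = Rep_lin (phi B) (\<lambda>k. if k = j then 1 else 0) i"
    using assms(1) by simp
  then show "A $$ (i, j) = B $$ (i, j)"
    using ij assms(2,3) by (simp add: phi.rep_eq if_distrib[of "\<lambda>v. _ * v"] cong: if_cong)
qed (use assms in auto)

lemma assoc_fact: "(u::lin) * v = w \<Longrightarrow> u * (v * x) = w * x"
  by (metis mult.assoc)

lemma R1_step:
  fixes a b a' b' s s1 pi pi1 pd pd1 jj Pn Pm :: lin
  assumes ab: "a*b = Pn" and ba: "b*a = Pn" and ab': "a'*b' = Pn" and b'a': "b'*a' = Pn"
    and jj: "jj*jj = Pm"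
    and Ps: "Pn*s = s" "s*Pn = s" and Ppi: "Pn*pi = pi" "pi*Pm = pi" and Ppd: "pd*Pn = pd" "Pm*pd = pd"
    and Pb: "Pn*b' = b'" "b*Pn = b"
    and R1: "a*s - s*a' = sc \<i> * (pi*jj*pd)"
    and s1: "s1 = s + b*s*b' + b*pi*pd*b'" and pi1: "pi1 = pi + sc \<i> * (b*pi*jj)"
    and pd1: "pd1 = pd - sc \<i> * (jj*pd*b')"
  shows "a*s1 - s1*a' = sc \<i> * (pi1*jj*pd1)"
proof -
  note simps = ab ba ab' b'a' jj Ps Ppi Ppd Pb
    assoc_fact[OF ab] assoc_fact[OF ba] assoc_fact[OF ab'] assoc_fact[OF b'a'] assoc_fact[OF jj]
    assoc_fact[OF Ps(1)] assoc_fact[OF Ps(2)] assoc_fact[OF Ppi(1)] assoc_fact[OF Ppi(2)]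
    assoc_fact[OF Ppd(1)] assoc_fact[OF Ppd(2)] assoc_fact[OF Pb(1)] assoc_fact[OF Pb(2)]
    sc_comm2[of a] sc_comm2[of b] sc_comm2[of a'] sc_comm2[of b'] sc_comm2[of s] sc_comm2[of pi]
    sc_comm2[of pd] sc_comm2[of jj] sc_mult2 sc_mult sc_uminus sc_one
  have e1: "a*s1 - s1*a'
      = (a*s - s*a') + b*(a*s - s*a')*b' + pi*pd*b' - b*pi*pd" unfolding s1
    by (simp add: algebra_simps simps)
  show ?thesis unfolding e1 R1 pi1 pd1
    by (simp add: algebra_simps simps)
qed

lemma assoc_comm: "(x::lin) * y = y * x \<Longrightarrow> x * (y * t) = y * (x * t)"
  by (metis mult.assoc)

lemma key_ring:
  fixes a b a' b' s q s1 q1 u u1 v v1 jj r C Pn Pm ii kk zz yy :: lin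
  assumes cen: "\<And>x. x*ii = ii*x" "\<And>x. x*kk = kk*x" "\<And>x. x*zz = zz*x"
    and ii2: "ii*ii = -1" and zk: "zz*kk = ii" and kz: "kk*zz = ii" and zi: "zz*ii = ii*zz" and ki: "kk*ii = ii*kk"
    and yz: "yy*zz = 1"
    and absb: "Pn*a = a" "a*Pn = a" "Pn*b = b" "b*Pn = b" "Pn*a' = a'" "a'*Pn = a'" "Pn*b' = b'" "b'*Pn = b'" "Pn*s = s" "s*Pn = s" "Pn*q = q" "q*Pn = q" "Pn*s1 = s1" "s1*Pn = s1" "Pn*q1 = q1" "q1*Pn = q1" "Pn*u = u" "u*Pm = u" "Pn*u1 = u1" "u1*Pm = u1" "Pm*v = v" "v*Pn = v" "Pm*v1 = v1" "v1*Pn = v1" "Pm*jj = jj" "jj*Pm = jj" "Pn*r = r" "r*Pn = r" "Pm*C = C" "C*Pm = C" "Pn*Pn = Pn" "Pm*Pm = Pm"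
    and ab: "a*b = Pn" and ba: "b*a = Pn" and b'a': "b'*a' = Pn" and jj2: "jj*jj = Pm"
    and qs: "q*s = Pn" and sq: "s*q = Pn" and q1s1: "q1*s1 = Pn"
    and R1: "a*s - s*a' = ii*(u*jj*v)"
    and u1: "u1 = u + ii*(b*u*jj)" and v1: "v1 = v - ii*(jj*v*b')"
    and s1: "s1 = s + b*s*b' + b*u*v*b'"
    and ra: "r*a = a*r" and zr: "zz*r = a*r - Pn"
    and Cdef: "C = Pm + v*q*u - v1*q1*u1"
  shows "(Pm - kk*(jj*C))*(Pm - ii*(jj*v*q*r*u)) = (Pm - ii*(jj*v1*q1*r*u1))*(Pm - kk*jj)"
proof -
  note N = absb assoc_fact[OF absb(1)] assoc_fact[OF absb(2)] assoc_fact[OF absb(3)] assoc_fact[OF absb(4)] assoc_fact[OF absb(5)] assoc_fact[OF absb(6)] assoc_fact[OF absb(7)] assoc_fact[OF absb(8)] assoc_fact[OF absb(9)] assoc_fact[OF absb(10)] assoc_fact[OF absb(11)] assoc_fact[OF absb(12)] assoc_fact[OF absb(13)] assoc_fact[OF absb(14)] assoc_fact[OF absb(15)] assoc_fact[OF absb(16)] assoc_fact[OF absb(17)] assoc_fact[OF absb(18)] assoc_fact[OF absb(19)] assoc_fact[OF absb(20)] assoc_fact[OF absb(21)] assoc_fact[OF absb(22)] assoc_fact[OF absb(23)] assoc_fact[OF absb(24)] assoc_fact[OF absb(25)] assoc_fact[OF absb(26)] assoc_fact[OF absb(27)] assoc_fact[OF absb(28)] assoc_fact[OF absb(29)] assoc_fact[OF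 absb(30)] assoc_fact[OF absb(31)] assoc_fact[OF absb(32)] ab assoc_fact[OF ab] ba assoc_fact[OF ba] b'a' assoc_fact[OF b'a'] jj2 assoc_fact[OF jj2] qs assoc_fact[OF qs] sq assoc_fact[OF sq] q1s1 assoc_fact[OF q1s1] ii2 assoc_fact[OF ii2] zk assoc_fact[OF zk] kz assoc_fact[OF kz] zi assoc_fact[OF zi] ki assoc_fact[OF ki] cen(1)[of "a"] assoc_comm[OF cen(1)[of "a"]] cen(1)[of "b"] assoc_comm[OF cen(1)[of "b"]] cen(1)[of "a'"] assoc_comm[OF cen(1)[of "a'"]] cen(1)[of "b'"] assoc_comm[OF cen(1)[of "b'"]] cen(1)[of "s"] assoc_comm[OF cen(1)[of "s"]] cen(1)[of "q"] assoc_comm[OF cen(1)[of "q"]] cen(1)[of "s1"] assoc_comm[OF cen(1)[of "s1"]] cen(1)[of "q1"] assoc_comm[OF cen(1)[of "q1"]] cen(1)[of "u"] assoc_comm[OF cen(1)[of "u"]] cen(1)[of "u1"] assoc_comm[OF cen(1)[of "u1"]] cen(1)[of "v"] assoc_comm[OF cen(1)[of "v"]] cen(1)[of "v1"] assoc_comm[OF cen(1)[of "v1"]] cen(1)[of "jj"] assoc_comm[OF cen(1)[of "jj"]] cen(1)[of "r"] assoc_comm[OF cen(1)[of "r"]] cen(1)[of "C"] assoc_comm[OF cen(1)[of "C"]] cen(1)[of "Pn"] assoc_comm[OF cen(1)[of "Pn"]] cen(1)[of "Pm"] assoc_comm[OF cen(1)[of "Pm"]] cen(2)[of "a"] assoc_comm[OF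 cen(2)[of "a"]] cen(2)[of "b"] assoc_comm[OF cen(2)[of "b"]] cen(2)[of "a'"] assoc_comm[OF cen(2)[of "a'"]] cen(2)[of "b'"] assoc_comm[OF cen(2)[of "b'"]] cen(2)[of "s"] assoc_comm[OF cen(2)[of "s"]] cen(2)[of "q"] assoc_comm[OF cen(2)[of "q"]] cen(2)[of "s1"] assoc_comm[OF cen(2)[of "s1"]] cen(2)[of "q1"] assoc_comm[OF cen(2)[of "q1"]] cen(2)[of "u"] assoc_comm[OF cen(2)[of "u"]] cen(2)[of "u1"] assoc_comm[OF cen(2)[of "u1"]] cen(2)[of "v"] assoc_comm[OF cen(2)[of "v"]] cen(2)[of "v1"] assoc_comm[OF cen(2)[of "v1"]] cen(2)[of "jj"] assoc_comm[OF cen(2)[of "jj"]] cen(2)[of "r"] assoc_comm[OF cen(2)[of "r"]] cen(2)[of "C"] assoc_comm[OF cen(2)[of "C"]] cen(2)[of "Pn"] assoc_comm[OF cen(2)[of "Pn"]] cen(2)[of "Pm"] assoc_comm[OF cen(2)[of "Pm"]] cen(3)[of "a"] assoc_comm[OF cen(3)[of "a"]] cen(3)[of "b"] assoc_comm[OF cen(3)[of "b"]] cen(3)[of "a'"] assoc_comm[OF cen(3)[of "a'"]] cen(3)[of "b'"] assoc_comm[OF cen(3)[of "b'"]] cen(3)[of "s"] assoc_comm[OF cen(3)[of "s"]] cen(3)[of "q"] assoc_comm[OF cen(3)[of "q"]] cen(3)[of "s1"] assoc_comm[OF cen(3)[of "s1"]] cen(3)[of "q1"] assoc_comm[OF cen(3)[of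 "q1"]] cen(3)[of "u"] assoc_comm[OF cen(3)[of "u"]] cen(3)[of "u1"] assoc_comm[OF cen(3)[of "u1"]] cen(3)[of "v"] assoc_comm[OF cen(3)[of "v"]] cen(3)[of "v1"] assoc_comm[OF cen(3)[of "v1"]] cen(3)[of "jj"] assoc_comm[OF cen(3)[of "jj"]] cen(3)[of "r"] assoc_comm[OF cen(3)[of "r"]] cen(3)[of "C"] assoc_comm[OF cen(3)[of "C"]] cen(3)[of "Pn"] assoc_comm[OF cen(3)[of "Pn"]] cen(3)[of "Pm"] assoc_comm[OF cen(3)[of "Pm"]]
  have rb: "r*b = b*r"
  proof -
    have "r*b = (b*a)*r*b" by (simp add: ba N)
    also have "\<dots> = b*(r*a)*b" by (simp add: mult.assoc ra)
    also have "\<dots> = b*r" by (simp add: mult.assoc ab N)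
    finally show ?thesis .
  qed
  note N' = N rb assoc_comm[OF rb] ra assoc_comm[OF ra]
  have AS: "a*s = s*a' + ii*(u*jj*v)" using R1 by (simp add: algebra_simps)
  have K: "(a+b)*s = s1*a' + ii*(u1*jj*v)"
  proof -
    have "s1*a' + ii*(u1*jj*v) = s*a' + ii*(u*jj*v) + b*s"
      by (simp add: s1 u1 algebra_simps N)
    then show ?thesis by (simp add: AS algebra_simps)
  qed
  have SS: "v1*q1*(a+b) = v*q*a - ii*(C*jj*v*q)"
  proof -
    have L: "v1*q1*(a+b)*s = v1*a' + ii*(v1*q1*u1*jj*v)"
    proof -
      have "v1*q1*(a+b)*s = v1*q1*((a+b)*s)" by (simp only: mult.assoc)
      also have "\<dots> = v1*q1*(s1*a' + ii*(u1*jj*v))" by (simp only: K)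
      also have "\<dots> = v1*a' + ii*(v1*q1*u1*jj*v)" by (simp add: algebra_simps N)
      finally show ?thesis .
    qed
    have L2: "v1*a' = v*a' - ii*(jj*v)" by (simp add: v1 algebra_simps N)
    have R: "(v*q*a - ii*(C*jj*v*q))*s = v*a' - ii*(jj*v) + ii*(v1*q1*u1*jj*v)"
      by (simp add: algebra_simps N AS assoc_fact[OF AS] Cdef)
    have Z: "(v1*q1*(a+b) - (v*q*a - ii*(C*jj*v*q)))*s = 0"
    proof -
      have "(v1*q1*(a+b) - (v*q*a - ii*(C*jj*v*q)))*s = v1*q1*(a+b)*s - (v*q*a - ii*(C*jj*v*q))*s"
        by (rule left_diff_distrib)
      also have "\<dots> = 0" unfolding L R L2 by simp
      finally show ?thesis .
    qed
    have "v1*q1*(a+b) - (v*q*a - ii*(C*jj*v*q)) = (v1*q1*(a+b) - (v*q*a - ii*(C*jj*v*q)))*(s*q)"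
      by (simp add: algebra_simps N)
    also have "\<dots> = ((v1*q1*(a+b) - (v*q*a - ii*(C*jj*v*q)))*s)*q" by (rule mult.assoc[symmetric])
    also have "\<dots> = 0" by (simp only: Z mult_zero_left)
    finally show ?thesis by simp
  qed
  have F1: "ii*(a*u1) + u1*jj = ii*((a+b)*u)" by (simp add: u1 algebra_simps N)
  define M where "M = zz*Pm - ii*jj + ii*(jj*(v1*(q1*u1))) - ii*(jj*((v*q*a - ii*(C*jj*v*q))*(r*u)))"
  have RZ: "zz*((Pm - ii*(jj*v1*q1*r*u1))*(Pm - kk*jj)) = M"
  proof -
    have "zz*((Pm - ii*(jj*v1*q1*r*u1))*(Pm - kk*jj))
        = zz*Pm - ii*jj - ii*(jj*(v1*(q1*((zz*r)*u1)))) - jj*(v1*(q1*(r*(u1*jj))))"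
      by (simp add: algebra_simps N)
    also have "\<dots> = zz*Pm - ii*jj - ii*(jj*(v1*(q1*((a*r - Pn)*u1)))) - jj*(v1*(q1*(r*(u1*jj))))"
      by (simp only: zr)
    also have "\<dots> = zz*Pm - ii*jj + ii*(jj*(v1*(q1*u1))) - jj*(v1*(q1*(r*(ii*(a*u1) + u1*jj))))"
      by (simp add: algebra_simps N')
    also have "\<dots> = zz*Pm - ii*jj + ii*(jj*(v1*(q1*u1))) - jj*(v1*(q1*(r*(ii*((a+b)*u)))))"
      by (simp only: F1)
    also have "\<dots> = zz*Pm - ii*jj + ii*(jj*(v1*(q1*u1))) - ii*(jj*((v1*q1*(a+b))*(r*u)))"
      by (simp add: algebra_simps N')
    also have "\<dots> = M" unfolding M_def by (simp only: SS)
    finally show ?thesis .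
  qed
  have LZ: "zz*((Pm - kk*(jj*C))*(Pm - ii*(jj*v*q*r*u))) = M"
  proof -
    have "zz*((Pm - kk*(jj*C))*(Pm - ii*(jj*v*q*r*u)))
        = zz*Pm - ii*(jj*(v*(q*((zz*r)*u)))) - ii*(jj*C) - jj*(C*(jj*(v*(q*(r*u)))))"
      by (simp add: algebra_simps N)
    also have "\<dots> = zz*Pm - ii*(jj*(v*(q*((a*r - Pn)*u)))) - ii*(jj*C) - jj*(C*(jj*(v*(q*(r*u)))))"
      by (simp only: zr)
    also have "\<dots> = M" unfolding M_def by (simp add: algebra_simps N' Cdef)
    finally show ?thesis .
  qed
  have "(Pm - kk*(jj*C))*(Pm - ii*(jj*v*q*r*u)) = yy*(zz*((Pm - kk*(jj*C))*(Pm - ii*(jj*v*q*r*u))))"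
    by (simp add: mult.assoc[symmetric] yz)
  also have "\<dots> = yy*(zz*((Pm - ii*(jj*v1*q1*r*u1))*(Pm - kk*jj)))" using LZ RZ by simp
  also have "\<dots> = (Pm - ii*(jj*v1*q1*r*u1))*(Pm - kk*jj)" by (simp add: mult.assoc[symmetric] yz)
  finally show ?thesis .
qed

lemma minv_carrier: assumes "M \<in> carrier_mat k k" shows "minv M \<in> carrier_mat k k"
  using adj_mat(1)[OF assms] unfolding minv_def carrier_mat_def by simp

lemma minv_left: assumes "M \<in> carrier_mat k k" "det M \<noteq> 0" shows "minv M * M = 1\<^sub>m k"
proof -
  have "minv M * M = (1 / det M) \<cdot>\<^sub>m (adj_mat M * M)"
    unfolding minv_def using adj_mat(1)[OF assms(1)] assms(1) by (simp add: mult_smult_assoc_mat)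
  also have "\<dots> = (1 / det M) \<cdot>\<^sub>m (det M \<cdot>\<^sub>m 1\<^sub>m k)" using adj_mat(3)[OF assms(1)] by simp
  also have "\<dots> = 1\<^sub>m k" by (rule eq_matI) (simp_all add: assms(2))
  finally show ?thesis .
qed

lemma minv_right: assumes "M \<in> carrier_mat k k" "det M \<noteq> 0" shows "M * minv M = 1\<^sub>m k"
proof -
  have "M * minv M = (1 / det M) \<cdot>\<^sub>m (M * adj_mat M)"
    unfolding minv_def using adj_mat(1)[OF assms(1)] assms(1) by (simp add: mult_smult_distrib)
  also have "\<dots> = (1 / det M) \<cdot>\<^sub>m (det M \<cdot>\<^sub>m 1\<^sub>m k)" using adj_mat(2)[OF assms(1)] by simp
  also have "\<dots> = 1\<^sub>m k" by (rule eq_matI) (simp_all add: assms(2))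
  finally show ?thesis .
qed

lemma adj_idx: fixes A :: "complex mat"
  assumes i: "i < dim_col A" and j: "j < dim_row A"
  shows "mat_adjoint A $$ (i,j) = cnj (A $$ (j,i))"
proof -
  have "mat_adjoint A $$ (i,j) = map conjugate (cols A) ! i $ j"
    unfolding mat_adjoint_def by (rule mat_of_rows_index) (simp_all add: i j)
  also have "\<dots> = conjugate (col A i) $ j" using i by simp
  also have "\<dots> = conjugate (col A i $ j)" using j by (simp only: vec_index_conjugate dim_col)
  also have "\<dots> = cnj (A $$ (j,i))" using i j by simp
  finally show ?thesis .
qed

lemma adj_dims[simp]: "dim_row (mat_adjoint A) = dim_col A" "dim_col (mat_adjoint A) = dim_row A"
  unfolding mat_adjoint_def by (simp_all add: mat_of_rows_def)

lemma adj_add: "dim_row (A::complex mat) = dim_row B \<Longrightarrow> dim_col A = dim_col B \<Longrightarrow>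
   mat_adjoint (A + B) = mat_adjoint A + mat_adjoint B"
  by (rule eq_matI) (simp_all add: adj_idx)

lemma adj_minus: "dim_row (A::complex mat) = dim_row B \<Longrightarrow> dim_col A = dim_col B \<Longrightarrow>
   mat_adjoint (A - B) = mat_adjoint A - mat_adjoint B"
  by (rule eq_matI) (simp_all add: adj_idx)

lemma adj_smult: "mat_adjoint (c \<cdot>\<^sub>m (A::complex mat)) = cnj c \<cdot>\<^sub>m mat_adjoint A"
  by (rule eq_matI) (simp_all add: adj_idx)

lemma adj_one: "mat_adjoint (1\<^sub>m k) = (1\<^sub>m k :: complex mat)"
  by (rule eq_matI) (simp_all add: adj_idx)

lemma adj_mult: "dim_col (A::complex mat) = dim_row B \<Longrightarrow> mat_adjoint (A * B) = mat_adjoint B * mat_adjoint A"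
proof (rule eq_matI)
  assume d: "dim_col A = dim_row B"
  fix i j assume i: "i < dim_row (mat_adjoint B * mat_adjoint A)" and j: "j < dim_col (mat_adjoint B * mat_adjoint A)"
  then have i': "i < dim_col B" and j': "j < dim_row A" by simp_all
  have "(mat_adjoint B * mat_adjoint A) $$ (i,j) = (\<Sum>k\<in>{0..<dim_row B}. cnj (B $$ (k,i)) * cnj (A $$ (j,k)))"
    using i' j' d by (simp add: scalar_prod_def adj_idx)
  also have "\<dots> = cnj (\<Sum>k\<in>{0..<dim_row B}. A $$ (j,k) * B $$ (k,i))"
    by (simp add: mult.commute)
  also have "\<dots> = mat_adjoint (A * B) $$ (i,j)"
    using i' j' d by (simp add: scalar_prod_def adj_idx)
  finally show "mat_adjoint (A * B) $$ (i,j) = (mat_adjoint B * mat_adjoint A) $$ (i,j)" by simp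
qed simp_all

lemma jmat_carrier: "jmat p \<in> carrier_mat (2*p) (2*p)"
  unfolding jmat_def carrier_mat_def by simp

lemma jmat_adj: "mat_adjoint (jmat p) = jmat p"
  by (rule eq_matI) (simp_all add: adj_idx jmat_def)

lemma jmat_sq: "jmat p * jmat p = 1\<^sub>m (2*p)"
proof (rule eq_matI)
  fix i j assume ij: "i < dim_row (1\<^sub>m (2*p))" "j < dim_col (1\<^sub>m (2*p))"
  have e: "\<And>k. k < 2*p \<Longrightarrow> jmat p $$ (i,k) = (if k = i then (if i < p then 1 else -1) else 0)"
    using ij unfolding jmat_def by simp
  have "(jmat p * jmat p) $$ (i,j) = (\<Sum>k\<in>{0..<2*p}. jmat p $$ (i,k) * jmat p $$ (k,j))"
    using ij jmat_carrier[of p] by (simp add: scalar_prod_def)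
  also have "\<dots> = (\<Sum>k\<in>{0..<2*p}. (if k = i then (if i < p then 1 else -1) * jmat p $$ (k,j) else 0))"
    by (rule sum.cong) (simp_all add: e)
  also have "\<dots> = (if i < p then 1 else -1) * jmat p $$ (i,j)"
    using ij by (simp add: sum.delta)
  also have "\<dots> = 1\<^sub>m (2*p) $$ (i,j)" using ij unfolding jmat_def by simp
  finally show "(jmat p * jmat p) $$ (i,j) = 1\<^sub>m (2*p) $$ (i,j)" .
qed (simp_all add: jmat_def)

lemma phi_one_left: "dim_row X = k \<Longrightarrow> phi (1\<^sub>m k) * phi X = phi X"
  using phi_mult[of "1\<^sub>m k" X] by simp
lemma phi_one_right: "dim_col X = k \<Longrightarrow> phi X * phi (1\<^sub>m k) = phi X"
  using phi_mult[of X "1\<^sub>m k"] by simp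

lemmas phis = phi_mult phi_add phi_minus phi_smult

lemma carrier_dims: "X \<in> carrier_mat r c \<Longrightarrow> dim_row X = r \<and> dim_col X = c"
  by auto

lemma adj_carrier: "(X::complex mat) \<in> carrier_mat r c \<Longrightarrow> mat_adjoint X \<in> carrier_mat c r"
  unfolding carrier_mat_def by simp

lemma seq_dims:
  fixes A S0 Pi0 :: "complex mat"
  assumes A: "A \<in> carrier_mat n n" and S0: "S0 \<in> carrier_mat n n" and P0: "Pi0 \<in> carrier_mat n (2*p)"
  shows "Pi_seq p A Pi0 k \<in> carrier_mat n (2*p) \<and> S_seq p A S0 Pi0 k \<in> carrier_mat n n"
proof (induction k)
  case 0 then show ?case using S0 P0 by simp
next
  case (Suc k)
  have B: "minv A \<in> carrier_mat n n" by (rule minv_carrier[OF A])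
  have BH: "minv (mat_adjoint A) \<in> carrier_mat n n" by (rule minv_carrier[OF adj_carrier[OF A]])
  have d: "dim_row (Pi_seq p A Pi0 k) = n" "dim_col (Pi_seq p A Pi0 k) = 2*p"
    "dim_row (S_seq p A S0 Pi0 k) = n" "dim_col (S_seq p A S0 Pi0 k) = n"
    using Suc by auto
  have d2: "dim_row (minv A) = n" "dim_col (minv A) = n" "dim_row (minv (mat_adjoint A)) = n"
    "dim_col (minv (mat_adjoint A)) = n" "dim_col (jmat p) = 2*p" "dim_row (jmat p) = 2*p"
    using B BH jmat_carrier[of p] by auto
  show ?case by (intro conjI carrier_matI) (simp_all only: Pi_seq.simps S_seq.simps index_add_mat index_smult_mat index_mult_mat d d2 adj_dims)
qed

lemma det_adj_nz: fixes A :: "complex mat" assumes A: "A \<in> carrier_mat n n" and d: "det A \<noteq> 0"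
  shows "det (mat_adjoint A) \<noteq> 0"
proof -
  have "mat_adjoint A * mat_adjoint (minv A) = mat_adjoint (minv A * A)"
    using A minv_carrier[OF A] by (simp add: adj_mult)
  also have "\<dots> = 1\<^sub>m n" using minv_left[OF A d] by (simp add: adj_one)
  finally have "det (mat_adjoint A) * det (mat_adjoint (minv A)) = 1"
    using det_mult[OF adj_carrier[OF A] adj_carrier[OF minv_carrier[OF A]]] by simp
  then show ?thesis by auto
qed

lemma adj_minv: fixes A :: "complex mat" assumes A: "A \<in> carrier_mat n n" and d: "det A \<noteq> 0"
  shows "mat_adjoint (minv A) = minv (mat_adjoint A)"
proof -
  have AH: "mat_adjoint A \<in> carrier_mat n n" by (rule adj_carrier[OF A])
  have BH: "minv (mat_adjoint A) \<in> carrier_mat n n" by (rule minv_carrier[OF AH])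
  have HB: "mat_adjoint (minv A) \<in> carrier_mat n n" by (rule adj_carrier[OF minv_carrier[OF A]])
  have e1: "mat_adjoint A * mat_adjoint (minv A) = 1\<^sub>m n"
  proof -
    have "mat_adjoint A * mat_adjoint (minv A) = mat_adjoint (minv A * A)"
      using A minv_carrier[OF A] by (simp add: adj_mult)
    also have "\<dots> = 1\<^sub>m n" using minv_left[OF A d] by (simp add: adj_one)
    finally show ?thesis .
  qed
  have "minv (mat_adjoint A) = minv (mat_adjoint A) * (mat_adjoint A * mat_adjoint (minv A))"
    using e1 BH by simp
  also have "\<dots> = (minv (mat_adjoint A) * mat_adjoint A) * mat_adjoint (minv A)"
    using AH BH HB by (simp add: assoc_mult_mat)
  also have "\<dots> = mat_adjoint (minv A)"
    using minv_left[OF AH det_adj_nz[OF A d]] HB by (simp add: left_mult_one_mat)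
  finally show ?thesis by simp
qed

lemma adj_Pi_Suc:
  fixes A S0 Pi0 :: "complex mat"
  assumes A: "A \<in> carrier_mat n n" and d: "det A \<noteq> 0" and P0: "Pi0 \<in> carrier_mat n (2*p)"
    and S0: "S0 \<in> carrier_mat n n"
  shows "mat_adjoint (Pi_seq p A Pi0 (Suc k)) =
     mat_adjoint (Pi_seq p A Pi0 k) + (- \<i>) \<cdot>\<^sub>m (jmat p * mat_adjoint (Pi_seq p A Pi0 k) * minv (mat_adjoint A))"
proof -
  have P: "Pi_seq p A Pi0 k \<in> carrier_mat n (2*p)" using seq_dims[OF A S0 P0] by blast
  have B: "minv A \<in> carrier_mat n n" by (rule minv_carrier[OF A])
  show ?thesis
    using P B jmat_carrier[of p]
    by (simp add: adj_add adj_smult adj_mult jmat_adj adj_minv[OF A d])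
qed

lemma R1_all:
  fixes A S0 Pi0 :: "complex mat"
  assumes A: "A \<in> carrier_mat n n" and d: "det A \<noteq> 0" and S0: "S0 \<in> carrier_mat n n"
    and P0: "Pi0 \<in> carrier_mat n (2*p)"
    and R0: "A * S0 - S0 * mat_adjoint A = \<i> \<cdot>\<^sub>m (Pi0 * jmat p * mat_adjoint Pi0)"
  shows "A * S_seq p A S0 Pi0 k - S_seq p A S0 Pi0 k * mat_adjoint A
       = \<i> \<cdot>\<^sub>m (Pi_seq p A Pi0 k * jmat p * mat_adjoint (Pi_seq p A Pi0 k))"
proof (induction k)
  case 0 show ?case using R0 by simp
next
  case (Suc k)
  define S where "S = S_seq p A S0 Pi0 k"
  define S1 where "S1 = S_seq p A S0 Pi0 (Suc k)"
  define P where "P = Pi_seq p A Pi0 k"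
  define P1 where "P1 = Pi_seq p A Pi0 (Suc k)"
  define PH where "PH = mat_adjoint P"
  define PH1 where "PH1 = mat_adjoint P1"
  define B where "B = minv A"
  define AH where "AH = mat_adjoint A"
  define BH where "BH = minv AH"
  define J where "J = jmat p"
  have IH: "A * S - S * AH = \<i> \<cdot>\<^sub>m (P * J * PH)"
    using Suc.IH unfolding S_def AH_def P_def J_def PH_def .
  have cS: "S \<in> carrier_mat n n" "S1 \<in> carrier_mat n n" and cP: "P \<in> carrier_mat n (2*p)" "P1 \<in> carrier_mat n (2*p)"
    unfolding S_def S1_def P_def P1_def using seq_dims[OF A S0 P0] by blast+
  have cB: "B \<in> carrier_mat n n" unfolding B_def by (rule minv_carrier[OF A])
  have cAH: "AH \<in> carrier_mat n n" unfolding AH_def by (rule adj_carrier[OF A])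
  have cBH: "BH \<in> carrier_mat n n" unfolding BH_def by (rule minv_carrier[OF cAH])
  have cJ: "J \<in> carrier_mat (2*p) (2*p)" unfolding J_def by (rule jmat_carrier)
  have cPH: "PH \<in> carrier_mat (2*p) n" "PH1 \<in> carrier_mat (2*p) n"
    unfolding PH_def PH1_def using cP by (simp_all add: adj_carrier)
  note dims = carrier_dims[OF A] carrier_dims[OF cS(1)] carrier_dims[OF cS(2)] carrier_dims[OF cP(1)]
    carrier_dims[OF cP(2)] carrier_dims[OF cB] carrier_dims[OF cAH] carrier_dims[OF cBH]
    carrier_dims[OF cJ] carrier_dims[OF cPH(1)] carrier_dims[OF cPH(2)]
  have S1e: "S1 = S + B*S*BH + B*P*PH*BH"
    unfolding S1_def S_def B_def BH_def AH_def P_def PH_def by simp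
  have P1e: "P1 = P + \<i> \<cdot>\<^sub>m (B*P*J)"
    unfolding P1_def P_def B_def J_def by simp
  have PH1e: "PH1 = PH + (- \<i>) \<cdot>\<^sub>m (J * PH * BH)"
    unfolding PH1_def P1_def PH_def P_def J_def BH_def AH_def using adj_Pi_Suc[OF A d P0 S0] .
  have l_s1: "phi S1 = phi S + phi B * phi S * phi BH + phi B * phi P * phi PH * phi BH"
    unfolding S1e using dims by (simp add: phis)
  have l_p1: "phi P1 = phi P + sc \<i> * (phi B * phi P * phi J)"
    unfolding P1e using dims by (simp add: phis)
  have l_ph1: "phi PH1 = phi PH - sc \<i> * (phi J * phi PH * phi BH)"
    unfolding PH1e using dims by (simp add: phis sc_uminus mult.assoc)
  have l_R: "phi A * phi S - phi S * phi AH = sc \<i> * (phi P * phi J * phi PH)"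
  proof -
    have "phi (A * S - S * AH) = phi (\<i> \<cdot>\<^sub>m (P * J * PH))" using IH by simp
    then show ?thesis using dims by (simp add: phis)
  qed
  have ab: "phi A * phi B = phi (1\<^sub>m n)"
  proof -
    have "phi (A * B) = phi (1\<^sub>m n)" using minv_right[OF A d] unfolding B_def by simp
    then show ?thesis using dims by (simp add: phi_mult)
  qed
  have ba: "phi B * phi A = phi (1\<^sub>m n)"
  proof -
    have "phi (B * A) = phi (1\<^sub>m n)" using minv_left[OF A d] unfolding B_def by simp
    then show ?thesis using dims by (simp add: phi_mult)
  qed
  have dAH: "det AH \<noteq> 0" unfolding AH_def by (rule det_adj_nz[OF A d])
  have ab': "phi AH * phi BH = phi (1\<^sub>m n)"
  proof -
    have "phi (AH * BH) = phi (1\<^sub>m n)" using minv_right[OF cAH dAH] unfolding BH_def by simp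
    then show ?thesis using dims by (simp add: phi_mult)
  qed
  have b'a': "phi BH * phi AH = phi (1\<^sub>m n)"
  proof -
    have "phi (BH * AH) = phi (1\<^sub>m n)" using minv_left[OF cAH dAH] unfolding BH_def by simp
    then show ?thesis using dims by (simp add: phi_mult)
  qed
  have jj: "phi J * phi J = phi (1\<^sub>m (2*p))"
  proof -
    have "phi (J * J) = phi (1\<^sub>m (2*p))" using jmat_sq[of p] unfolding J_def by simp
    then show ?thesis using dims by (simp add: phi_mult)
  qed
  have L: "phi A * phi S1 - phi S1 * phi AH = sc \<i> * (phi P1 * phi J * phi PH1)"
    by (rule R1_step[OF ab ba ab' b'a' jj _ _ _ _ _ _ _ _ l_R l_s1 l_p1 l_ph1])
       (use dims in \<open>simp_all add: phi_one_left phi_one_right\<close>)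
  have "phi (A * S1 - S1 * AH) = phi (\<i> \<cdot>\<^sub>m (P1 * J * PH1))"
    using L dims by (simp add: phis)
  then have "A * S1 - S1 * AH = \<i> \<cdot>\<^sub>m (P1 * J * PH1)"
    by (rule phi_inj) (use dims in simp_all)
  then show ?case unfolding S1_def AH_def P1_def J_def PH1_def .
qed

lemma key_step:
  fixes A S0 Pi0 :: "complex mat" and z :: complex
  assumes A: "A \<in> carrier_mat n n" and d: "det A \<noteq> 0" and S0: "S0 \<in> carrier_mat n n"
    and P0: "Pi0 \<in> carrier_mat n (2*p)"
    and R0: "A * S0 - S0 * mat_adjoint A = \<i> \<cdot>\<^sub>m (Pi0 * jmat p * mat_adjoint Pi0)"
    and dS: "det (S_seq p A S0 Pi0 k) \<noteq> 0" and dS1: "det (S_seq p A S0 Pi0 (Suc k)) \<noteq> 0"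
    and z: "z \<noteq> 0" and dz: "det (A - z \<cdot>\<^sub>m 1\<^sub>m n) \<noteq> 0"
  shows "(phi (1\<^sub>m (2*p)) - sc (\<i>/z) * (phi (jmat p) * phi (C_mat p A S0 Pi0 k))) * phi (wA p A S0 Pi0 k z)
       = phi (wA p A S0 Pi0 (Suc k) z) * (phi (1\<^sub>m (2*p)) - sc (\<i>/z) * phi (jmat p))"
proof -
  define S where "S = S_seq p A S0 Pi0 k"
  define S1 where "S1 = S_seq p A S0 Pi0 (Suc k)"
  define Q where "Q = minv S"
  define Q1 where "Q1 = minv S1"
  define P where "P = Pi_seq p A Pi0 k"
  define P1 where "P1 = Pi_seq p A Pi0 (Suc k)"
  define PH where "PH = mat_adjoint P"
  define PH1 where "PH1 = mat_adjoint P1"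
  define B where "B = minv A"
  define AH where "AH = mat_adjoint A"
  define BH where "BH = minv AH"
  define J where "J = jmat p"
  define D where "D = A - z \<cdot>\<^sub>m 1\<^sub>m n"
  define R where "R = minv D"
  define Cm where "Cm = C_mat p A S0 Pi0 k"
  have cS: "S \<in> carrier_mat n n" "S1 \<in> carrier_mat n n" and cP: "P \<in> carrier_mat n (2*p)" "P1 \<in> carrier_mat n (2*p)"
    unfolding S_def S1_def P_def P1_def using seq_dims[OF A S0 P0] by blast+
  have cQ: "Q \<in> carrier_mat n n" "Q1 \<in> carrier_mat n n" unfolding Q_def Q1_def using cS by (simp_all add: minv_carrier)
  have cB: "B \<in> carrier_mat n n" unfolding B_def by (rule minv_carrier[OF A])
  have cAH: "AH \<in> carrier_mat n n" unfolding AH_def by (rule adj_carrier[OF A])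
  have cBH: "BH \<in> carrier_mat n n" unfolding BH_def by (rule minv_carrier[OF cAH])
  have cJ: "J \<in> carrier_mat (2*p) (2*p)" unfolding J_def by (rule jmat_carrier)
  have cPH: "PH \<in> carrier_mat (2*p) n" "PH1 \<in> carrier_mat (2*p) n"
    unfolding PH_def PH1_def using cP by (simp_all add: adj_carrier)
  have cD: "D \<in> carrier_mat n n" using carrier_dims[OF A] by (intro carrier_matI) (simp_all add: D_def)
  have cR: "R \<in> carrier_mat n n" unfolding R_def by (rule minv_carrier[OF cD])
  note dims0 = carrier_dims[OF A] carrier_dims[OF cS(1)] carrier_dims[OF cS(2)] carrier_dims[OF cP(1)]
    carrier_dims[OF cP(2)] carrier_dims[OF cB] carrier_dims[OF cAH] carrier_dims[OF cBH]
    carrier_dims[OF cJ] carrier_dims[OF cPH(1)] carrier_dims[OF cPH(2)] carrier_dims[OF cQ(1)]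
    carrier_dims[OF cQ(2)] carrier_dims[OF cR]
  have cC: "Cm \<in> carrier_mat (2*p) (2*p)"
    using dims0 unfolding P_def P1_def S_def S1_def Q_def Q1_def PH_def PH1_def J_def
    by (intro carrier_matI) (simp_all add: Cm_def C_mat_def)
  note dims = dims0 carrier_dims[OF cC]
  have Ce: "Cm = 1\<^sub>m (2*p) + PH * Q * P - PH1 * Q1 * P1"
    unfolding Cm_def C_mat_def PH_def PH1_def Q_def Q1_def P_def P1_def S_def S1_def ..
  have wk: "wA p A S0 Pi0 k z = 1\<^sub>m (2*p) - \<i> \<cdot>\<^sub>m (J * PH * Q * R * P)"
    unfolding wA_def J_def PH_def Q_def R_def P_def S_def D_def using A by simp
  have wk1: "wA p A S0 Pi0 (Suc k) z = 1\<^sub>m (2*p) - \<i> \<cdot>\<^sub>m (J * PH1 * Q1 * R * P1)"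
    unfolding wA_def J_def PH1_def Q1_def R_def P1_def S1_def D_def using A by simp
  have S1e: "S1 = S + B*S*BH + B*P*PH*BH"
    unfolding S1_def S_def B_def BH_def AH_def P_def PH_def by simp
  have P1e: "P1 = P + \<i> \<cdot>\<^sub>m (B*P*J)"
    unfolding P1_def P_def B_def J_def by simp
  have PH1e: "PH1 = PH + (- \<i>) \<cdot>\<^sub>m (J * PH * BH)"
    unfolding PH1_def P1_def PH_def P_def J_def BH_def AH_def using adj_Pi_Suc[OF A d P0 S0] .
  have IH: "A * S - S * AH = \<i> \<cdot>\<^sub>m (P * J * PH)"
    using R1_all[OF A d S0 P0 R0, of k] unfolding S_def AH_def P_def J_def PH_def .
  define a where "a = phi A"
  define b where "b = phi B"
  define a' where "a' = phi AH"
  define b' where "b' = phi BH"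
  define s where "s = phi S"
  define q where "q = phi Q"
  define s1 where "s1 = phi S1"
  define q1 where "q1 = phi Q1"
  define u where "u = phi P"
  define u1 where "u1 = phi P1"
  define v where "v = phi PH"
  define v1 where "v1 = phi PH1"
  define jj where "jj = phi J"
  define r where "r = phi R"
  define C where "C = phi Cm"
  define Pn where "Pn = phi (1\<^sub>m n)"
  define Pm where "Pm = phi (1\<^sub>m (2*p))"
  note ldefs = a_def b_def a'_def b'_def s_def q_def s1_def q1_def u_def u1_def v_def v1_def jj_def
    r_def C_def Pn_def Pm_def
  have ii2: "sc \<i> * sc \<i> = -1" by (simp add: sc_mult sc_uminus sc_one)
  have zk: "sc z * sc (\<i>/z) = sc \<i>" using z by (simp add: sc_mult)
  have kz: "sc (\<i>/z) * sc z = sc \<i>" using z by (simp add: sc_mult)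
  have zi: "sc z * sc \<i> = sc \<i> * sc z" by (simp add: sc_mult mult.commute)
  have ki: "sc (\<i>/z) * sc \<i> = sc \<i> * sc (\<i>/z)" by (simp add: sc_mult mult.commute)
  have yz: "sc (1/z) * sc z = 1" using z by (simp add: sc_mult sc_one)
  have absb: "Pn*a = a" "a*Pn = a" "Pn*b = b" "b*Pn = b" "Pn*a' = a'" "a'*Pn = a'" "Pn*b' = b'" "b'*Pn = b'"
    "Pn*s = s" "s*Pn = s" "Pn*q = q" "q*Pn = q" "Pn*s1 = s1" "s1*Pn = s1" "Pn*q1 = q1" "q1*Pn = q1"
    "Pn*u = u" "u*Pm = u" "Pn*u1 = u1" "u1*Pm = u1" "Pm*v = v" "v*Pn = v" "Pm*v1 = v1" "v1*Pn = v1"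
    "Pm*jj = jj" "jj*Pm = jj" "Pn*r = r" "r*Pn = r" "Pm*C = C" "C*Pm = C" "Pn*Pn = Pn" "Pm*Pm = Pm"
    unfolding ldefs using dims by (simp_all add: phi_one_left phi_one_right)
  have mk: "\<And>X Y k. X * Y = 1\<^sub>m k \<Longrightarrow> dim_col X = dim_row Y \<Longrightarrow> phi X * phi Y = phi (1\<^sub>m k)"
    by (metis phi_mult)
  have ab: "a*b = Pn" unfolding ldefs B_def by (rule mk[OF minv_right[OF A d]]) (use dims in \<open>simp add: B_def[symmetric] BH_def[symmetric] Q_def[symmetric] Q1_def[symmetric] J_def[symmetric] R_def[symmetric]\<close>)
  have ba: "b*a = Pn" unfolding ldefs B_def by (rule mk[OF minv_left[OF A d]]) (use dims in \<open>simp add: B_def[symmetric] BH_def[symmetric] Q_def[symmetric] Q1_def[symmetric] J_def[symmetric] R_def[symmetric]\<close>)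
  have dAH: "det AH \<noteq> 0" unfolding AH_def by (rule det_adj_nz[OF A d])
  have b'a': "b'*a' = Pn" unfolding ldefs BH_def by (rule mk[OF minv_left[OF cAH dAH]]) (use dims in \<open>simp add: B_def[symmetric] BH_def[symmetric] Q_def[symmetric] Q1_def[symmetric] J_def[symmetric] R_def[symmetric]\<close>)
  have jj2: "jj*jj = Pm" unfolding ldefs J_def by (rule mk[OF jmat_sq]) (use dims in \<open>simp add: B_def[symmetric] BH_def[symmetric] Q_def[symmetric] Q1_def[symmetric] J_def[symmetric] R_def[symmetric]\<close>)
  have dSS: "det S \<noteq> 0" "det S1 \<noteq> 0" using dS dS1 unfolding S_def S1_def .
  have qs: "q*s = Pn" unfolding ldefs Q_def by (rule mk[OF minv_left[OF cS(1) dSS(1)]]) (use dims in \<open>simp add: B_def[symmetric] BH_def[symmetric] Q_def[symmetric] Q1_def[symmetric] J_def[symmetric] R_def[symmetric]\<close>)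
  have sq: "s*q = Pn" unfolding ldefs Q_def by (rule mk[OF minv_right[OF cS(1) dSS(1)]]) (use dims in \<open>simp add: B_def[symmetric] BH_def[symmetric] Q_def[symmetric] Q1_def[symmetric] J_def[symmetric] R_def[symmetric]\<close>)
  have q1s1: "q1*s1 = Pn" unfolding ldefs Q1_def by (rule mk[OF minv_left[OF cS(2) dSS(2)]]) (use dims in \<open>simp add: B_def[symmetric] BH_def[symmetric] Q_def[symmetric] Q1_def[symmetric] J_def[symmetric] R_def[symmetric]\<close>)
  have R1: "a*s - s*a' = sc \<i> * (u*jj*v)"
  proof -
    have "phi (A * S - S * AH) = phi (\<i> \<cdot>\<^sub>m (P * J * PH))" using IH by simp
    then show ?thesis unfolding ldefs using dims by (simp add: phis)
  qed
  have l_s1: "s1 = s + b*s*b' + b*u*v*b'"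
    unfolding ldefs S1e using dims by (simp add: phis)
  have l_u1: "u1 = u + sc \<i> * (b*u*jj)"
    unfolding ldefs P1e using dims by (simp add: phis)
  have l_v1: "v1 = v - sc \<i> * (jj*v*b')"
    unfolding ldefs PH1e using dims by (simp add: phis sc_uminus mult.assoc)
  have l_C: "C = Pm + v*q*u - v1*q1*u1"
    unfolding ldefs Ce using dims by (simp add: phis)
  have dD: "det D \<noteq> 0" using dz unfolding D_def .
  have phiD: "phi D = a - sc z * Pn" unfolding ldefs D_def using dims by (simp add: phis)
  have rd: "r * (a - sc z * Pn) = Pn" unfolding phiD[symmetric] unfolding ldefs R_def
    by (rule mk[OF minv_left[OF cD dD]]) (use dims cD in \<open>simp add: B_def[symmetric] BH_def[symmetric] Q_def[symmetric] Q1_def[symmetric] J_def[symmetric] R_def[symmetric]\<close>)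
  have dr: "(a - sc z * Pn) * r = Pn" unfolding phiD[symmetric] unfolding ldefs R_def
    by (rule mk[OF minv_right[OF cD dD]]) (use dims cD in \<open>simp add: B_def[symmetric] BH_def[symmetric] Q_def[symmetric] Q1_def[symmetric] J_def[symmetric] R_def[symmetric]\<close>)
  have h1: "r*a = Pn + sc z * r" using rd absb(28) by (simp add: algebra_simps sc_comm2[of r])
  have h2: "a*r = Pn + sc z * r" using dr absb(27) by (simp add: algebra_simps)
  have ra: "r*a = a*r" using h1 h2 by simp
  have zr: "sc z * r = a*r - Pn" using h2 by simp
  have main: "(Pm - sc (\<i>/z)*(jj*C))*(Pm - sc \<i>*(jj*v*q*r*u)) = (Pm - sc \<i>*(jj*v1*q1*r*u1))*(Pm - sc (\<i>/z)*jj)"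
    by (rule key_ring[OF sc_comm sc_comm sc_comm ii2 zk kz zi ki yz absb ab ba b'a' jj2 qs sq q1s1 R1 l_u1 l_v1 l_s1 ra zr l_C])
  have pw: "phi (wA p A S0 Pi0 k z) = Pm - sc \<i>*(jj*v*q*r*u)"
    unfolding wk ldefs using dims by (simp add: phis)
  have pw1: "phi (wA p A S0 Pi0 (Suc k) z) = Pm - sc \<i>*(jj*v1*q1*r*u1)"
    unfolding wk1 ldefs using dims by (simp add: phis)
  show ?thesis using main unfolding pw pw1 unfolding ldefs J_def Cm_def .
qed

lemma C_carrier:
  fixes A S0 Pi0 :: "complex mat"
  assumes A: "A \<in> carrier_mat n n" and S0: "S0 \<in> carrier_mat n n" and P0: "Pi0 \<in> carrier_mat n (2*p)"
  shows "C_mat p A S0 Pi0 k \<in> carrier_mat (2*p) (2*p)"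
proof -
  have cP: "Pi_seq p A Pi0 k \<in> carrier_mat n (2*p)" "Pi_seq p A Pi0 (Suc k) \<in> carrier_mat n (2*p)"
    using seq_dims[OF A S0 P0] by blast+
  have cS: "S_seq p A S0 Pi0 k \<in> carrier_mat n n" "S_seq p A S0 Pi0 (Suc k) \<in> carrier_mat n n"
    using seq_dims[OF A S0 P0] by blast+
  show ?thesis
    using carrier_dims[OF cP(1)] carrier_dims[OF cP(2)] carrier_dims[OF minv_carrier[OF cS(1)]]
      carrier_dims[OF minv_carrier[OF cS(2)]]
    by (intro carrier_matI) (simp_all add: C_mat_def)
qed

lemma W_carrier:
  fixes A S0 Pi0 :: "complex mat"
  assumes A: "A \<in> carrier_mat n n" and S0: "S0 \<in> carrier_mat n n" and P0: "Pi0 \<in> carrier_mat n (2*p)"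
  shows "W_seq p A S0 Pi0 k z \<in> carrier_mat (2*p) (2*p)"
proof (induction k)
  case 0 then show ?case by simp
next
  case (Suc k)
  then show ?case
    using carrier_dims[OF C_carrier[OF A S0 P0, of k]] carrier_dims[OF jmat_carrier[of p]] carrier_dims[OF Suc]
    by (intro carrier_matI) simp_all
qed

lemma wA_carrier:
  fixes A S0 Pi0 :: "complex mat"
  assumes A: "A \<in> carrier_mat n n" and S0: "S0 \<in> carrier_mat n n" and P0: "Pi0 \<in> carrier_mat n (2*p)"
  shows "wA p A S0 Pi0 k z \<in> carrier_mat (2*p) (2*p)"
proof -
  have cP: "Pi_seq p A Pi0 k \<in> carrier_mat n (2*p)" using seq_dims[OF A S0 P0] by blast
  show ?thesis
    using carrier_dims[OF cP] carrier_dims[OF jmat_carrier[of p]]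
    by (intro carrier_matI) (simp_all add: wA_def)
qed

lemma phi_pow:
  assumes E: "E \<in> carrier_mat m m"
  shows "phi (E ^\<^sub>m Suc j) = phi E ^ Suc j"
proof (induction j)
  case 0
  have "phi (E ^\<^sub>m Suc 0) = phi (1\<^sub>m m * E)" using E by simp
  also have "\<dots> = phi E" using E by simp
  finally show ?case by simp
next
  case (Suc j)
  have "phi (E ^\<^sub>m Suc (Suc j)) = phi (E ^\<^sub>m Suc j * E)" by simp
  also have "\<dots> = phi (E ^\<^sub>m Suc j) * phi E" using E by (simp add: phi_mult)
  also have "\<dots> = phi E ^ Suc j * phi E" by (simp only: Suc.IH)
  also have "\<dots> = phi E ^ Suc (Suc j)" by (rule power_Suc2[symmetric])
  finally show ?case .
qed

theorem theorem2p2: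
  fixes p n N :: nat and A S0 Pi0 :: "complex mat"
  assumes "p \<ge> 1" and "n > 0"
    and "A \<in> carrier_mat n n" and "det A \<noteq> 0"
    and "S0 \<in> carrier_mat n n" and "mat_adjoint S0 = S0"
    and "Pi0 \<in> carrier_mat n (2*p)"
    and "A * S0 - S0 * mat_adjoint A = \<i> \<cdot>\<^sub>m (Pi0 * jmat p * mat_adjoint Pi0)"
    and "\<forall>r \<le> N. det (S_seq p A S0 Pi0 r) \<noteq> 0"
  shows "\<forall>k < N. \<forall>z. z \<noteq> 0 \<and> det (A - z \<cdot>\<^sub>m 1\<^sub>m n) \<noteq> 0 \<and> det (wA p A S0 Pi0 0 z) \<noteq> 0 \<longrightarrow>
           W_seq p A S0 Pi0 (Suc k) z =
             wA p A S0 Pi0 (Suc k) z * ((1\<^sub>m (2*p) - (\<i> / z) \<cdot>\<^sub>m jmat p) ^\<^sub>m (Suc k))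
             * minv (wA p A S0 Pi0 0 z)"
proof (intro allI impI)
  note A = assms(3) and d = assms(4) and S0 = assms(5) and P0 = assms(7) and R0 = assms(8)
    and dS = assms(9)
  fix k z assume k: "k < N"
    and H: "z \<noteq> 0 \<and> det (A - z \<cdot>\<^sub>m 1\<^sub>m n) \<noteq> 0 \<and> det (wA p A S0 Pi0 0 z) \<noteq> 0"
  then have z: "z \<noteq> 0" and dz: "det (A - z \<cdot>\<^sub>m 1\<^sub>m n) \<noteq> 0" and dw: "det (wA p A S0 Pi0 0 z) \<noteq> 0"
    by auto
  define E where "E = 1\<^sub>m (2*p) - (\<i> / z) \<cdot>\<^sub>m jmat p"
  define W0 where "W0 = wA p A S0 Pi0 0 z"
  define MW where "MW = minv W0"
  have cE: "E \<in> carrier_mat (2*p) (2*p)" unfolding E_def using carrier_dims[OF jmat_carrier[of p]]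
    by (intro carrier_matI) simp_all
  have cW0: "W0 \<in> carrier_mat (2*p) (2*p)" unfolding W0_def by (rule wA_carrier[OF A S0 P0])
  have cMW: "MW \<in> carrier_mat (2*p) (2*p)" unfolding MW_def by (rule minv_carrier[OF cW0])
  have phiE: "phi E = phi (1\<^sub>m (2*p)) - sc (\<i>/z) * phi (jmat p)"
    unfolding E_def using carrier_dims[OF jmat_carrier[of p]] by (simp add: phis)
  have claim: "j \<le> N \<Longrightarrow> phi (W_seq p A S0 Pi0 j z) = phi (wA p A S0 Pi0 j z) * phi E ^ j * phi MW" for j
  proof (induction j)
    case 0
    have "phi W0 * phi MW = phi (W0 * MW)" using cW0 cMW by (simp add: phi_mult)
    also have "\<dots> = phi (1\<^sub>m (2*p))" unfolding MW_def using minv_right[OF cW0] dw unfolding W0_def by simp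
    finally show ?case unfolding W0_def by simp
  next
    case (Suc j)
    then have jN: "j \<le> N" and IH: "phi (W_seq p A S0 Pi0 j z) = phi (wA p A S0 Pi0 j z) * phi E ^ j * phi MW"
      by auto
    have cWj: "W_seq p A S0 Pi0 j z \<in> carrier_mat (2*p) (2*p)" by (rule W_carrier[OF A S0 P0])
    have cCj: "C_mat p A S0 Pi0 j \<in> carrier_mat (2*p) (2*p)" by (rule C_carrier[OF A S0 P0])
    have ks: "(phi (1\<^sub>m (2*p)) - sc (\<i>/z) * (phi (jmat p) * phi (C_mat p A S0 Pi0 j))) * phi (wA p A S0 Pi0 j z)
       = phi (wA p A S0 Pi0 (Suc j) z) * (phi (1\<^sub>m (2*p)) - sc (\<i>/z) * phi (jmat p))"
      by (rule key_step[OF A d S0 P0 R0 _ _ z dz]) (use dS Suc.prems jN in auto)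
    have "phi (W_seq p A S0 Pi0 (Suc j) z)
        = phi (W_seq p A S0 Pi0 j z) - sc (\<i>/z) * (phi (jmat p) * phi (C_mat p A S0 Pi0 j) * phi (W_seq p A S0 Pi0 j z))"
      using carrier_dims[OF cWj] carrier_dims[OF cCj] carrier_dims[OF jmat_carrier[of p]] by (simp add: phis)
    also have "\<dots> = (phi (1\<^sub>m (2*p)) - sc (\<i>/z) * (phi (jmat p) * phi (C_mat p A S0 Pi0 j))) * phi (W_seq p A S0 Pi0 j z)"
      using carrier_dims[OF cWj] by (simp add: algebra_simps phi_one_left)
    also have "\<dots> = (phi (1\<^sub>m (2*p)) - sc (\<i>/z) * (phi (jmat p) * phi (C_mat p A S0 Pi0 j))) * phi (wA p A S0 Pi0 j z) * (phi E ^ j * phi MW)"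
      unfolding IH by (simp add: mult.assoc)
    also have "\<dots> = phi (wA p A S0 Pi0 (Suc j) z) * phi E ^ Suc j * phi MW"
      unfolding ks phiE[symmetric] by (simp add: mult.assoc)
    finally show ?case .
  qed
  have cWk: "W_seq p A S0 Pi0 (Suc k) z \<in> carrier_mat (2*p) (2*p)" by (rule W_carrier[OF A S0 P0])
  have cwk: "wA p A S0 Pi0 (Suc k) z \<in> carrier_mat (2*p) (2*p)" by (rule wA_carrier[OF A S0 P0])
  have cEk: "E ^\<^sub>m Suc k \<in> carrier_mat (2*p) (2*p)" using pow_carrier_mat[OF cE, of "Suc k"] .
  have "phi (wA p A S0 Pi0 (Suc k) z * E ^\<^sub>m Suc k * MW) = phi (wA p A S0 Pi0 (Suc k) z) * phi E ^ Suc k * phi MW"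
    using carrier_dims[OF cwk] carrier_dims[OF cEk] carrier_dims[OF cMW] phi_pow[OF cE, of k]
    by (simp add: phi_mult)
  also have "\<dots> = phi (W_seq p A S0 Pi0 (Suc k) z)" using claim[of "Suc k"] k by simp
  finally have "W_seq p A S0 Pi0 (Suc k) z = wA p A S0 Pi0 (Suc k) z * E ^\<^sub>m Suc k * MW"
    by (rule phi_inj[OF sym]) (use carrier_dims[OF cwk] carrier_dims[OF cEk] carrier_dims[OF cMW] carrier_dims[OF cWk] in simp_all)
  then show "W_seq p A S0 Pi0 (Suc k) z =
             wA p A S0 Pi0 (Suc k) z * ((1\<^sub>m (2*p) - (\<i> / z) \<cdot>\<^sub>m jmat p) ^\<^sub>m (Suc k))
             * minv (wA p A S0 Pi0 0 z)"
    unfolding E_def MW_def W0_def .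
qed

end
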